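(* Let $\mu$ be the measure associated with a sequence $(p_n,q_n)_{n\ge0}$, $0\le p_n,q_n\le1$, by the non-homogeneous Markov rule, and let $c_n=\frac{-1}{n\log2}\sum_{I\in\mathcal F_n}\mu(I)\log\mu(I)$. Then for $\mu$-almost every $x\in\mathbb K$, $$\lim_{n\to\infty}\left[\frac{\log\mu(I_n(x))}{-n\log 2}-c_n\right]=0.$$
   Context: $\mathbb K=\{0,1\}^{\mathbb N}$; $\mathcal F_n$ is the set of cylinders $I_{\epsilon_1\dots\epsilon_n}$ of generation $n$; $I_n(x)$ is the cylinder of $\mathcal F_n$ containing $x$. $\mu$: $\mu(I_0)=p_0$, $\mu(I_1)=1-p_0$, and for $n\ge1$, $I=I_{\epsilon_1\dots\epsilon_n}$, the child $I_{\epsilon_1\dots\epsilon_n0}$ receives the proportion $p_n$ (resp. $q_n$) of $\mu(I)$ and $I_{\epsilon_1\dots\epsilon_n1}$ the proportion $1-p_n$ (resp. $1-q_n$) when $\epsilon_n=0$ (resp. $\epsilon_n=1$). Convention $0\log0=0$. *)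

theory Defs
  imports "HOL-Probability.Probability"
begin

text \<open>The Cantor space K = {0,1}^N is modelled as nat => bool, with False = 0, True = 1.
  A point x corresponds to the sequence (eps_1, eps_2, ...) with eps_k = x (k - 1).\<close>

definition Kspace :: "(nat \<Rightarrow> bool) measure" where
  "Kspace = (\<Pi>\<^sub>M i\<in>(UNIV::nat set). count_space (UNIV::bool set))"

definition cylinder :: "(nat \<Rightarrow> bool) \<Rightarrow> nat \<Rightarrow> (nat \<Rightarrow> bool) set" where
  "cylinder x n = {y. \<forall>i<n. y i = x i}"

definition cylinders :: "nat \<Rightarrow> (nat \<Rightarrow> bool) set set" where
  "cylinders n = {cylinder x n | x. True}"

text \<open>Transition proportion at step k (k >= 1): from digit eps_k = a to digit eps_{k+1} = b.\<close>
definition trans_prop :: "(nat \<Rightarrow> real) \<Rightarrow> (nat \<Rightarrow> real) \<Rightarrow> nat \<Rightarrow> bool \<Rightarrow> bool \<Rightarrow> real" where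
  "trans_prop p q k a b =
     (if \<not> a then (if \<not> b then p k else 1 - p k)
             else (if \<not> b then q k else 1 - q k))"

definition markov_weight :: "(nat \<Rightarrow> real) \<Rightarrow> (nat \<Rightarrow> real) \<Rightarrow> (nat \<Rightarrow> bool) \<Rightarrow> nat \<Rightarrow> real" where
  "markov_weight p q x n =
     (if n = 0 then 1
      else (if \<not> x 0 then p 0 else 1 - p 0) *
           (\<Prod>k\<in>{1..<n}. trans_prop p q k (x (k - 1)) (x k)))"

definition entropy_coeff :: "(nat \<Rightarrow> bool) measure \<Rightarrow> nat \<Rightarrow> real" where
  "entropy_coeff M n =
     -1 / (real n * ln 2) *
     (\<Sum>I\<in>cylinders n. (if measure M I = 0 then 0 else measure M I * ln (measure M I)))"

end

theory Submission
  imports Defs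
begin


fun st :: "bool list \<Rightarrow> bool" where
  "st [] = False" | "st (a # _) = a"

fun W :: "(nat\<Rightarrow>real) \<Rightarrow> (nat\<Rightarrow>real) \<Rightarrow> bool list \<Rightarrow> real" where
  "W p q [] = 1"
| "W p q (b # rs) = W p q rs * trans_prop p q (length rs) (st rs) b"

definition Ls :: "nat \<Rightarrow> bool list set" where
  "Ls n = {rs. length rs = n}"

lemma finite_Ls[simp]: "finite (Ls n)"
proof -
  have "Ls n = {xs. set xs \<subseteq> (UNIV::bool set) \<and> length xs = n}" by (auto simp: Ls_def)
  then show ?thesis using finite_lists_length_eq[of "UNIV::bool set" n] by simp
qed

lemma sum_Ls_Suc:
  "(\<Sum>rs\<in>Ls (Suc n). f rs) = (\<Sum>rs\<in>Ls n. f (True # rs) + f (False # rs))"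
proof -
  have e: "Ls (Suc n) = (\<lambda>rs. True#rs) ` Ls n \<union> (\<lambda>rs. False#rs) ` Ls n"
    by (auto simp: Ls_def length_Suc_conv)
  have "(\<Sum>rs\<in>Ls (Suc n). f rs) = (\<Sum>rs\<in>(\<lambda>rs. True#rs) ` Ls n. f rs) + (\<Sum>rs\<in>(\<lambda>rs. False#rs) ` Ls n. f rs)"
    unfolding e by (rule sum.union_disjoint) auto
  also have "\<dots> = (\<Sum>rs\<in>Ls n. f (True # rs)) + (\<Sum>rs\<in>Ls n. f (False # rs))"
    by (subst sum.reindex, simp add: inj_on_def, subst sum.reindex, simp add: inj_on_def, simp)
  finally show ?thesis by (simp add: sum.distrib)
qed

lemma Ls_0: "Ls 0 = {[]}" by (auto simp: Ls_def)



lemma ent_sqrt: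
  fixes t :: real assumes "0 \<le> t" "t \<le> 1"
  shows "t * (- ln t) \<le> 2 * sqrt t" and "t * (ln t)^2 \<le> 4" and "0 \<le> t * (- ln t)"
    and "t * (- ln t) \<le> 1 - t"
proof -
  have all: "t * (- ln t) \<le> 2 * sqrt t \<and> t * (ln t)^2 \<le> 4 \<and> 0 \<le> t * (- ln t) \<and> t * (- ln t) \<le> 1 - t"
  proof (cases "t = 0")
    case True then show ?thesis by simp
  next
    case False
    then have tp: "0 < t" using assms by simp
    define y where "y = sqrt t"
    have yp: "0 < y" "y \<le> 1" using tp assms by (auto simp: y_def)
    have ty: "t = y^2" using assms by (simp add: y_def)
    have lt: "ln t = 2 * ln y" using yp by (simp add: ty ln_realpow)
    have l1: "ln (1/y) \<le> 1/y - 1" using yp by (intro ln_le_minus_one) simp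
    have "ln (1/y) = - ln y" using yp by (simp add: ln_div)
    then have l2: "- ln y \<le> 1/y" using l1 by linarith
    have l3: "0 \<le> - ln y" using yp by simp
    have a: "t * (- ln t) \<le> 2 * sqrt t"
    proof -
      have i1: "y * (- ln y) \<le> y * (1/y)" by (rule mult_left_mono[OF l2]) (use yp in auto)
      have i2: "2 * y * (y * (- ln y)) \<le> 2 * y * (y * (1/y))" by (rule mult_left_mono[OF i1]) (use yp in auto)
      have "t * (- ln t) = y^2 * (- (2 * ln y))" by (simp only: lt, simp only: ty)
      also have "\<dots> = 2 * y * (y * (- ln y))" by (simp add: power2_eq_square)
      also note i2
      finally show ?thesis using yp by (simp add: y_def)
    qed
    have b: "t * (ln t)^2 \<le> 4"
    proof -
      have "t * (ln t)^2 = y^2 * (2 * ln y)^2" by (simp only: lt, simp only: ty)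
      also have "\<dots> = 4 * (y * (- ln y))^2" by (simp add: power2_eq_square)
      also have "(y * (- ln y))^2 \<le> 1^2"
      proof (rule power_mono)
        show "y * (- ln y) \<le> 1" using mult_left_mono[OF l2, of y] yp by simp
        show "0 \<le> y * (- ln y)" using yp l3 by (intro mult_nonneg_nonneg) auto
      qed
      finally show ?thesis by simp
    qed
    have c: "0 \<le> t * (- ln t)" using tp assms by (intro mult_nonneg_nonneg) auto
    have d: "t * (- ln t) \<le> 1 - t"
    proof -
      have "ln (1/t) \<le> 1/t - 1" using tp by (intro ln_le_minus_one) simp
      then have "- ln t \<le> 1/t - 1" using tp by (simp add: ln_div)
      then have "t * (- ln t) \<le> t * (1/t - 1)" using tp by (intro mult_left_mono) auto
      moreover have "t * (1/t - 1) = 1 - t" using tp by (simp add: field_simps)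
      ultimately show ?thesis by linarith
    qed
    show ?thesis using a b c d by blast
  qed
  then show "t * (- ln t) \<le> 2 * sqrt t" "t * (ln t)^2 \<le> 4" "0 \<le> t * (- ln t)" "t * (- ln t) \<le> 1 - t"
    by auto
qed

lemma hb_bound:
  fixes t :: real assumes "0 \<le> t" "t \<le> 1"
  shows "t * (- ln t) + (1 - t) * (- ln (1 - t)) \<le> 3 * sqrt t"
proof -
  have "(1 - t) * (- ln (1 - t)) \<le> 1 - (1 - t)" using ent_sqrt(4)[of "1-t"] assms by simp
  moreover have "t \<le> sqrt t"
  proof -
    have "sqrt t * sqrt t \<le> sqrt t * 1" using assms by (intro mult_left_mono) auto
    then show ?thesis using assms by simp
  qed
  ultimately show ?thesis using ent_sqrt(1)[OF assms] by simp
qed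

locale mk =
  fixes p q :: "nat \<Rightarrow> real"
  assumes p_range: "\<And>n. 0 \<le> p n \<and> p n \<le> 1"
    and q_range: "\<And>n. 0 \<le> q n \<and> q n \<le> 1"
begin

abbreviation tr where "tr \<equiv> trans_prop p q"
abbreviation WW where "WW \<equiv> W p q"

lemma tr_nonneg: "0 \<le> tr n a b" using p_range[of n] q_range[of n] by (simp add: trans_prop_def)
lemma tr_le1: "tr n a b \<le> 1" using p_range[of n] q_range[of n] by (simp add: trans_prop_def)
lemma tr_sum: "tr n a True + tr n a False = 1" by (simp add: trans_prop_def)
lemma tr_True: "tr n a True = (1 - p n) + (p n - q n) * (if a then 1 else 0)"
  by (simp add: trans_prop_def)

lemma W_nonneg: "0 \<le> WW rs"
  by (induction rs) (auto intro!: mult_nonneg_nonneg tr_nonneg)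

lemma sum_W: "(\<Sum>rs\<in>Ls n. WW rs) = 1"
proof (induction n)
  case 0 then show ?case by (simp add: Ls_0)
next
  case (Suc n)
  have "(\<Sum>rs\<in>Ls (Suc n). WW rs) = (\<Sum>rs\<in>Ls n. WW rs * (tr (length rs) (st rs) True + tr (length rs) (st rs) False))"
    by (simp add: sum_Ls_Suc algebra_simps)
  also have "\<dots> = (\<Sum>rs\<in>Ls n. WW rs)" by (simp add: tr_sum)
  finally show ?case using Suc by simp
qed

definition G where "G n a = tr n a True * (- ln (tr n a True)) + tr n a False * (- ln (tr n a False))"

lemma G_nonneg: "0 \<le> G n a"
  unfolding G_def using ent_sqrt(3)[OF tr_nonneg tr_le1, of n a True] ent_sqrt(3)[OF tr_nonneg tr_le1, of n a False]
  by linarith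

lemma G_le1: "G n a \<le> 1"
  unfolding G_def using ent_sqrt(4)[OF tr_nonneg tr_le1, of n a True] ent_sqrt(4)[OF tr_nonneg tr_le1, of n a False]
    tr_sum[of n a] by simp

lemma G_sqrt: "G n a \<le> 3 * sqrt (1 - \<bar>p n - q n\<bar>)"
proof -
  have e1: "tr n a False = 1 - tr n a True" and e0: "tr n a True = 1 - tr n a False"
    using tr_sum[of n a] by linarith+
  have "G n a = tr n a True * (- ln (tr n a True)) + (1 - tr n a True) * (- ln (1 - tr n a True))"
    unfolding G_def by (subst (1 2) e1) simp
  then have s1: "G n a \<le> 3 * sqrt (tr n a True)"
    using hb_bound[OF tr_nonneg tr_le1, of n a True] by simp
  have "G n a = tr n a False * (- ln (tr n a False)) + (1 - tr n a False) * (- ln (1 - tr n a False))"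
    unfolding G_def by (subst (1 2) e0) simp
  then have s0: "G n a \<le> 3 * sqrt (tr n a False)"
    using hb_bound[OF tr_nonneg tr_le1, of n a False] by simp
  have "tr n a True \<le> 1 - \<bar>p n - q n\<bar> \<or> tr n a False \<le> 1 - \<bar>p n - q n\<bar>"
    using p_range[of n] q_range[of n] by (cases a) (auto simp: trans_prop_def abs_if)
  then show ?thesis using s0 s1 by (meson mult_left_mono order_trans real_sqrt_le_iff zero_le_numeral)
qed

end


lemma wl: fixes w t :: real
  assumes "0 \<le> w" "0 \<le> t"
  shows "w * t * F (- ln (w * t)) = w * t * F (- ln w - ln t)"
proof (cases "w * t = 0")
  case True then show ?thesis by simp
next
  case False
  then have "0 < w" "0 < t" using assms by (auto simp: less_le)
  then show ?thesis by (simp add: ln_mult)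
qed

context mk begin

definition S where "S rs = - ln (WW rs)"
definition ES where "ES n = (\<Sum>rs\<in>Ls n. WW rs * S rs)"
definition ind :: "bool \<Rightarrow> real" where "ind a = (if a then 1 else 0)"
definition VV where "VV n = (\<Sum>rs\<in>Ls n. WW rs * (S rs - ES n)^2)"
definition DD where "DD n = (\<Sum>rs\<in>Ls n. WW rs * ((S rs - ES n) * ind (st rs)))"
definition gam where "gam n = (\<Sum>rs\<in>Ls n. WW rs * G n (st rs))"
definition R where "R n a = tr n a True * (- ln (tr n a True) - gam n)^2 + tr n a False * (- ln (tr n a False) - gam n)^2"
definition rr where "rr n = (\<Sum>rs\<in>Ls n. WW rs * (tr n (st rs) True * (- ln (tr n (st rs) True) - gam n)))"

lemma sum_step:
  "(\<Sum>rs\<in>Ls (Suc n). WW rs * F (S rs) (st rs)) =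
   (\<Sum>rs\<in>Ls n. WW rs * (tr n (st rs) True * F (S rs - ln (tr n (st rs) True)) True
                      + tr n (st rs) False * F (S rs - ln (tr n (st rs) False)) False))"
  unfolding sum_Ls_Suc
proof (rule sum.cong[OF refl])
  fix rs assume "rs \<in> Ls n"
  then have l: "length rs = n" by (simp add: Ls_def)
  have e: "WW (b#rs) * F (S (b#rs)) (st (b#rs)) = WW rs * (tr n (st rs) b * F (S rs - ln (tr n (st rs) b)) b)" for b
  proof -
    have "WW (b#rs) * F (S (b#rs)) (st (b#rs)) = WW rs * tr n (st rs) b * F (- ln (WW rs * tr n (st rs) b)) b"
      by (simp add: S_def l)
    also have "\<dots> = WW rs * tr n (st rs) b * F (- ln (WW rs) - ln (tr n (st rs) b)) b"
      by (rule wl[OF W_nonneg tr_nonneg])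
    also have "\<dots> = WW rs * (tr n (st rs) b * F (S rs - ln (tr n (st rs) b)) b)"
      by (simp add: S_def mult.assoc)
    finally show ?thesis .
  qed
  show "WW (True # rs) * F (S (True # rs)) (st (True # rs)) + WW (False # rs) * F (S (False # rs)) (st (False # rs)) =
     WW rs * (tr n (st rs) True * F (S rs - ln (tr n (st rs) True)) True
                      + tr n (st rs) False * F (S rs - ln (tr n (st rs) False)) False)"
    by (simp only: e distrib_left)
qed

lemma sum_WX: "(\<Sum>rs\<in>Ls n. WW rs * (S rs - ES n)) = 0"
  by (simp add: algebra_simps sum_subtractf sum_distrib_left[symmetric] sum_distrib_right[symmetric] sum_W ES_def)

lemma G_eq: "G n a = tr n a True * (- ln (tr n a True)) + tr n a False * (- ln (tr n a False))"
  by (simp add: G_def)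

lemma ES_Suc: "ES (Suc n) = ES n + gam n"
proof -
  have "ES (Suc n) = (\<Sum>rs\<in>Ls n. WW rs * (tr n (st rs) True * (S rs - ln (tr n (st rs) True)) +
           tr n (st rs) False * (S rs - ln (tr n (st rs) False))))"
    using sum_step[where n=n and F="\<lambda>x b. x"] by (simp add: ES_def)
  also have "\<dots> = (\<Sum>rs\<in>Ls n. WW rs * S rs + WW rs * G n (st rs))"
  proof (rule sum.cong[OF refl])
    fix rs
    have "tr n (st rs) True + tr n (st rs) False = 1" by (rule tr_sum)
    then show "WW rs * (tr n (st rs) True * (S rs - ln (tr n (st rs) True)) +
           tr n (st rs) False * (S rs - ln (tr n (st rs) False))) = WW rs * S rs + WW rs * G n (st rs)"
      unfolding G_eq by algebra
  qed
  finally show ?thesis by (simp add: sum.distrib ES_def gam_def)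
qed

lemma gam_bounds: "0 \<le> gam n" "gam n \<le> 1" "gam n \<le> 3 * sqrt (1 - \<bar>p n - q n\<bar>)"
proof -
  show "0 \<le> gam n" unfolding gam_def by (intro sum_nonneg mult_nonneg_nonneg W_nonneg G_nonneg)
  have "gam n \<le> (\<Sum>rs\<in>Ls n. WW rs * 1)" unfolding gam_def
    by (intro sum_mono mult_left_mono W_nonneg G_le1)
  then show "gam n \<le> 1" by (simp add: sum_W)
  have "gam n \<le> (\<Sum>rs\<in>Ls n. WW rs * (3 * sqrt (1 - \<bar>p n - q n\<bar>)))" unfolding gam_def
    by (intro sum_mono mult_left_mono W_nonneg G_sqrt)
  then show "gam n \<le> 3 * sqrt (1 - \<bar>p n - q n\<bar>)" by (simp add: sum_W sum_distrib_right[symmetric])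
qed

lemma R_bounds: "0 \<le> R n a" "R n a \<le> 9"
proof -
  show "0 \<le> R n a" unfolding R_def by (intro add_nonneg_nonneg mult_nonneg_nonneg tr_nonneg) auto
  have g: "0 \<le> gam n" "gam n \<le> 1" using gam_bounds by auto
  have one: "tr n a b * (- ln (tr n a b) - gam n)^2 \<le> 4 + tr n a b" for b
  proof -
    have l0: "0 \<le> - ln (tr n a b)"
    proof (cases "tr n a b = 0")
      case False
      then have "0 < tr n a b" using tr_nonneg[of n a b] by simp
      then show ?thesis using tr_le1[of n a b] by simp
    qed simp
    have "(- ln (tr n a b) - gam n)^2 \<le> (ln (tr n a b))^2 + 1"
    proof -
      have "(- ln (tr n a b) - gam n)^2 = (ln (tr n a b))^2 - 2 * (- ln (tr n a b)) * gam n + (gam n)^2"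
        by (simp add: power2_eq_square algebra_simps)
      moreover have "0 \<le> (- ln (tr n a b)) * gam n" using l0 g by (intro mult_nonneg_nonneg) auto
      moreover have "(gam n)^2 \<le> 1" using g by (simp add: power_le_one)
      ultimately show ?thesis by linarith
    qed
    then have "tr n a b * (- ln (tr n a b) - gam n)^2 \<le> tr n a b * ((ln (tr n a b))^2 + 1)"
      by (rule mult_left_mono) (rule tr_nonneg)
    also have "\<dots> = tr n a b * (ln (tr n a b))^2 + tr n a b" by (simp add: algebra_simps)
    also have "\<dots> \<le> 4 + tr n a b" using ent_sqrt(2)[OF tr_nonneg tr_le1, of n a b] by simp
    finally show ?thesis .
  qed
  show "R n a \<le> 9" unfolding R_def using one[of True] one[of False] tr_sum[of n a] by simp
qed

lemma VV_Suc: "VV (Suc n) = VV n + 2 * (G n True - G n False) * DD n + (\<Sum>rs\<in>Ls n. WW rs * R n (st rs))"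
proof -
  have "VV (Suc n) = (\<Sum>rs\<in>Ls n. WW rs * (tr n (st rs) True * (S rs - ln (tr n (st rs) True) - (ES n + gam n))\<^sup>2 +
           tr n (st rs) False * (S rs - ln (tr n (st rs) False) - (ES n + gam n))\<^sup>2))"
    using sum_step[where n=n and F="\<lambda>x b. (x - (ES n + gam n))^2"] by (simp add: VV_def ES_Suc)
  also have "\<dots> = (\<Sum>rs\<in>Ls n. WW rs * (S rs - ES n)^2 + 2 * (WW rs * (S rs - ES n) * G n (st rs))
       - 2 * gam n * (WW rs * (S rs - ES n)) + WW rs * R n (st rs))"
  proof (rule sum.cong[OF refl])
    fix rs
    have "tr n (st rs) True + tr n (st rs) False = 1" by (rule tr_sum)
    then show "WW rs * (tr n (st rs) True * (S rs - ln (tr n (st rs) True) - (ES n + gam n))\<^sup>2 +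
           tr n (st rs) False * (S rs - ln (tr n (st rs) False) - (ES n + gam n))\<^sup>2) =
         WW rs * (S rs - ES n)^2 + 2 * (WW rs * (S rs - ES n) * G n (st rs))
       - 2 * gam n * (WW rs * (S rs - ES n)) + WW rs * R n (st rs)"
      unfolding G_eq R_def power2_eq_square by algebra
  qed
  also have "\<dots> = VV n + 2 * (\<Sum>rs\<in>Ls n. WW rs * (S rs - ES n) * G n (st rs))
       - 2 * gam n * (\<Sum>rs\<in>Ls n. WW rs * (S rs - ES n)) + (\<Sum>rs\<in>Ls n. WW rs * R n (st rs))"
    by (simp add: sum.distrib sum_subtractf sum_distrib_left VV_def)
  also have "(\<Sum>rs\<in>Ls n. WW rs * (S rs - ES n) * G n (st rs))
     = (\<Sum>rs\<in>Ls n. G n False * (WW rs * (S rs - ES n)) + (G n True - G n False) * (WW rs * ((S rs - ES n) * ind (st rs))))"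
    by (rule sum.cong[OF refl]) (simp add: ind_def algebra_simps)
  also have "\<dots> = (G n True - G n False) * DD n"
    by (simp add: sum.distrib sum_distrib_left[symmetric] sum_WX DD_def)
  finally show ?thesis by (simp add: sum_WX)
qed

lemma DD_Suc: "DD (Suc n) = (p n - q n) * DD n + rr n"
proof -
  have "DD (Suc n) = (\<Sum>rs\<in>Ls n. WW rs * (tr n (st rs) True * ((S rs - ln (tr n (st rs) True) - (ES n + gam n)) * ind True) +
           tr n (st rs) False * ((S rs - ln (tr n (st rs) False) - (ES n + gam n)) * ind False)))"
    using sum_step[where n=n and F="\<lambda>x b. (x - (ES n + gam n)) * ind b"] by (simp add: DD_def ES_Suc del: ind_def)
  also have "\<dots> = (\<Sum>rs\<in>Ls n. (1 - p n) * (WW rs * (S rs - ES n)) + (p n - q n) * (WW rs * ((S rs - ES n) * ind (st rs)))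
       + WW rs * (tr n (st rs) True * (- ln (tr n (st rs) True) - gam n)))"
  proof (rule sum.cong[OF refl])
    fix rs
    show "WW rs * (tr n (st rs) True * ((S rs - ln (tr n (st rs) True) - (ES n + gam n)) * ind True) +
           tr n (st rs) False * ((S rs - ln (tr n (st rs) False) - (ES n + gam n)) * ind False)) =
         (1 - p n) * (WW rs * (S rs - ES n)) + (p n - q n) * (WW rs * ((S rs - ES n) * ind (st rs)))
       + WW rs * (tr n (st rs) True * (- ln (tr n (st rs) True) - gam n))"
      unfolding tr_True by (simp add: ind_def algebra_simps)
  qed
  also have "\<dots> = (p n - q n) * DD n + rr n"
    by (simp add: sum.distrib sum_distrib_left[symmetric] sum_WX DD_def rr_def)
  finally show ?thesis .
qed

lemma rr_bound: "\<bar>rr n\<bar> \<le> gam n"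
proof -
  have a: "0 \<le> (\<Sum>rs\<in>Ls n. WW rs * (tr n (st rs) True * (- ln (tr n (st rs) True))))"
    by (intro sum_nonneg mult_nonneg_nonneg W_nonneg ent_sqrt(3) tr_nonneg tr_le1)
  have b: "(\<Sum>rs\<in>Ls n. WW rs * (tr n (st rs) True * (- ln (tr n (st rs) True)))) \<le> gam n"
    unfolding gam_def
  proof (intro sum_mono mult_left_mono W_nonneg)
    fix rs show "tr n (st rs) True * - ln (tr n (st rs) True) \<le> G n (st rs)"
      unfolding G_eq using ent_sqrt(3)[OF tr_nonneg tr_le1, of n "st rs" False] by simp
  qed
  have c: "0 \<le> (\<Sum>rs\<in>Ls n. WW rs * tr n (st rs) True)"
    by (intro sum_nonneg mult_nonneg_nonneg W_nonneg tr_nonneg)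
  have d: "(\<Sum>rs\<in>Ls n. WW rs * tr n (st rs) True) \<le> 1"
  proof -
    have "(\<Sum>rs\<in>Ls n. WW rs * tr n (st rs) True) \<le> (\<Sum>rs\<in>Ls n. WW rs * 1)"
      by (intro sum_mono mult_left_mono W_nonneg tr_le1)
    then show ?thesis by (simp add: sum_W)
  qed
  have e: "rr n = (\<Sum>rs\<in>Ls n. WW rs * (tr n (st rs) True * (- ln (tr n (st rs) True))))
      - gam n * (\<Sum>rs\<in>Ls n. WW rs * tr n (st rs) True)"
    by (simp add: rr_def algebra_simps sum_subtractf sum_distrib_left)
  have "0 \<le> gam n * (\<Sum>rs\<in>Ls n. WW rs * tr n (st rs) True)" "gam n * (\<Sum>rs\<in>Ls n. WW rs * tr n (st rs) True) \<le> gam n"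
    using c d gam_bounds(1)[of n] by (auto intro: mult_left_le)
  then show ?thesis using a b e by linarith
qed

end


lemma sqrt_amgm: fixes s T :: real assumes "0 \<le> s" "0 < T"
  shows "3 * sqrt s \<le> 2 * s * T + 2 / T"
proof -
  have "0 \<le> (sqrt s * T - 1)^2" by simp
  then have "2 * sqrt s * T \<le> s * T^2 + 1" using assms by (simp add: power2_eq_square algebra_simps)
  then have "2 * sqrt s * T / T \<le> (s * T^2 + 1) / T" using assms by (intro divide_right_mono) auto
  then have "2 * sqrt s \<le> s * T + 1 / T" using assms by (simp add: power2_eq_square add_divide_distrib)
  moreover have "0 \<le> s * T" "0 \<le> 1 / T" using assms by auto
  ultimately show ?thesis by linarith
qed

context mk begin

lemma ES_0: "ES 0 = 0" by (simp add: ES_def Ls_0 S_def)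
lemma DD_0: "DD 0 = 0" by (simp add: DD_def Ls_0 S_def ES_0 ind_def)
lemma VV_0: "VV 0 = 0" by (simp add: VV_def Ls_0 S_def ES_0)

lemma DD_bound: assumes "0 < T" shows "\<bar>DD n\<bar> \<le> 2 * T + 2 * real n / T"
proof (induction n)
  case 0 then show ?case using assms by (simp add: DD_0)
next
  case (Suc n)
  define l where "l = \<bar>p n - q n\<bar>"
  have l01: "0 \<le> l" "l \<le> 1" using p_range[of n] q_range[of n] by (auto simp: l_def abs_if)
  have "\<bar>DD (Suc n)\<bar> \<le> l * \<bar>DD n\<bar> + gam n"
  proof -
    have "\<bar>(p n - q n) * DD n + rr n\<bar> \<le> \<bar>(p n - q n) * DD n\<bar> + \<bar>rr n\<bar>" by (rule abs_triangle_ineq)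
    then show ?thesis using rr_bound[of n] unfolding DD_Suc l_def abs_mult by linarith
  qed
  also have "\<dots> \<le> l * (2 * T + 2 * real n / T) + 3 * sqrt (1 - l)"
    using Suc l01 gam_bounds(3)[of n] by (simp add: l_def mult_left_mono add_mono)
  also have "\<dots> \<le> l * (2 * T + 2 * real n / T) + (2 * (1 - l) * T + 2 / T)"
    using sqrt_amgm[of "1 - l" T] l01 assms by simp
  also have "\<dots> = 2 * T + 2 * real n / T - (1 - l) * (2 * real n / T) + 2 / T"
    using assms by (simp add: field_simps)
  also have "\<dots> \<le> 2 * T + 2 * real (Suc n) / T"
    using l01 assms by (simp add: add_divide_distrib)
  finally show ?case .
qed

lemma VV_step: "VV (Suc n) \<le> VV n + 2 * \<bar>DD n\<bar> + 9"
proof -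
  have g: "\<bar>G n True - G n False\<bar> \<le> 1" using G_nonneg[of n True] G_nonneg[of n False] G_le1[of n True] G_le1[of n False] unfolding abs_le_iff by linarith
  have "2 * (G n True - G n False) * DD n \<le> 2 * \<bar>DD n\<bar>"
  proof -
    have "(G n True - G n False) * DD n \<le> \<bar>G n True - G n False\<bar> * \<bar>DD n\<bar>" by (metis abs_ge_self abs_mult)
    also have "\<dots> \<le> 1 * \<bar>DD n\<bar>" using g by (intro mult_right_mono) auto
    finally show ?thesis by (simp only: mult.assoc)
  qed
  moreover have "(\<Sum>rs\<in>Ls n. WW rs * R n (st rs)) \<le> 9"
  proof -
    have "(\<Sum>rs\<in>Ls n. WW rs * R n (st rs)) \<le> (\<Sum>rs\<in>Ls n. WW rs * 9)"
      by (intro sum_mono mult_left_mono W_nonneg R_bounds)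
    then show ?thesis by (simp add: sum_distrib_right[symmetric] sum_W)
  qed
  ultimately show ?thesis using VV_Suc[of n] by linarith
qed

lemma VV_bound: assumes "0 < T" shows "VV n \<le> real n * (4 * T + 4 * real n / T + 9)"
proof -
  have "VV m \<le> real m * (4 * T + 4 * real n / T + 9)" if "m \<le> n" for m
    using that
  proof (induction m)
    case 0 then show ?case by (simp add: VV_0)
  next
    case (Suc m)
    have "\<bar>DD m\<bar> \<le> 2 * T + 2 * real n / T"
    proof -
      have "\<bar>DD m\<bar> \<le> 2 * T + 2 * real m / T" by (rule DD_bound[OF assms])
      also have "\<dots> \<le> 2 * T + 2 * real n / T" using Suc.prems assms by (simp add: divide_right_mono)
      finally show ?thesis .
    qed
    moreover have "real (Suc m) * (4 * T + 4 * real n / T + 9) = real m * (4 * T + 4 * real n / T + 9) + (4 * T + 4 * real n / T + 9)"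
      by (simp add: algebra_simps add_divide_distrib)
    moreover have "VV m \<le> real m * (4 * T + 4 * real n / T + 9)" using Suc by simp
    ultimately show ?case using VV_step[of m] by linarith
  qed
  then show ?thesis by simp
qed

lemma VV_k8: "VV ((k+1)^8) \<le> 17 * (real k + 1)^12"
proof -
  define u where "u = real k + 1"
  have u1: "1 \<le> u" by (simp add: u_def)
  have e: "real ((k+1)^8) = u^8" by (simp add: u_def add.commute)
  have "VV ((k+1)^8) \<le> real ((k+1)^8) * (4 * u^4 + 4 * real ((k+1)^8) / u^4 + 9)"
    using VV_bound[of "u^4" "(k+1)^8"] u1 by simp
  then have v: "VV ((k+1)^8) \<le> u^8 * (4 * u^4 + 4 * u^8 / u^4 + 9)" by (simp only: e)
  have d: "4 * u^8 / u^4 = 4 * u^4" using u1 by (simp add: field_simps flip: power_add)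
  have v2: "VV ((k+1)^8) \<le> u^8 * (4 * u^4 + 4 * u^4 + 9)" using v by (simp only: d)
  have "u^8 * (4 * u^4 + 4 * u^4 + 9) = 8 * u^12 + 9 * u^8" by (simp add: algebra_simps flip: power_add)
  moreover have "u^8 \<le> u^12" using u1 by (intro power_increasing) auto
  ultimately have "VV ((k+1)^8) \<le> 17 * u^12" using v2 by linarith
  then show ?thesis by (simp only: u_def)
qed

lemma ES_mono: "m \<le> n \<Longrightarrow> 0 \<le> ES n - ES m \<and> ES n - ES m \<le> real n - real m"
proof (induction n rule: dec_induct)
  case base then show ?case by simp
next
  case (step n) then show ?case using ES_Suc[of n] gam_bounds(1,2)[of n] by simp
qed

end

lemma poly8: fixes u :: real assumes "1 \<le> u"
  shows "(u+1)^8 - u^8 \<le> 255 * u^7" "(u+1)^7 \<le> 128 * u^7"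
proof -
  have e: "(u+1)^8 = u^8 + 8*u^7 + 28*u^6 + 56*u^5 + 70*u^4 + 56*u^3 + 28*u^2 + 8*u + 1"
    by algebra
  have "u^i \<le> u^7" if "i \<le> 7" for i using assms that by (intro power_increasing) auto
  from this[of 0] this[of 1] this[of 2] this[of 3] this[of 4] this[of 5] this[of 6]
  show "(u+1)^8 - u^8 \<le> 255 * u^7" unfolding e by simp
  have "(u+1)^7 \<le> (2*u)^7" using assms by (intro power_mono) auto
  then show "(u+1)^7 \<le> 128 * u^7" by (simp add: power_mult_distrib)
qed


lemma bracket8: "1 \<le> n \<Longrightarrow> \<exists>j. (j+1)^8 \<le> n \<and> n < (j+2::nat)^8"
proof (induction n rule: dec_induct)
  case base
  show ?case by (rule exI[of _ 0]) (simp add: eval_nat_numeral)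
next
  case (step n)
  then obtain j where j: "(j+1)^8 \<le> n" "n < (j+2::nat)^8" by blast
  show ?case
  proof (cases "Suc n < (j+2)^8")
    case True then show ?thesis using j by (intro exI[of _ j]) simp
  next
    case False
    then have A: "Suc n = (j+2)^8" using j by simp
    have B: "(j+2::nat)^8 < (j+3)^8" by (intro power_strict_mono) auto
    have E: "j + 1 + 1 = j + 2" "j + 1 + 2 = j + 3" by simp_all
    have "(j+1+1)^8 \<le> Suc n \<and> Suc n < (j+1+2)^8" by (simp only: E A B order_refl simp_thms)
    then show ?thesis by (rule exI)
  qed
qed

lemma det_lim:
  fixes a e :: "nat \<Rightarrow> real"
  assumes amono: "\<And>m n. m \<le> n \<Longrightarrow> a m \<le> a n"
    and einc: "\<And>m n. m \<le> n \<Longrightarrow> 0 \<le> e n - e m \<and> e n - e m \<le> real n - real m"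
    and ev: "eventually (\<lambda>k. \<bar>a ((k+1)^8) - e ((k+1)^8)\<bar> < (real k + 1)^7) sequentially"
  shows "(\<lambda>n. (a n - e n) / real n) \<longlonglongrightarrow> 0"
proof (rule LIMSEQ_I)
  fix r :: real assume r: "0 < r"
  obtain K where hK: "\<And>k. k \<ge> K \<Longrightarrow> \<bar>a ((k+1)^8) - e ((k+1)^8)\<bar> < (real k + 1)^7"
    using ev by (auto simp: eventually_sequentially)
  obtain m where m: "400 / r < real m" using reals_Archimedean2 by blast
  define K' where "K' = max K m"
  show "\<exists>no. \<forall>n\<ge>no. norm ((a n - e n) / real n - 0) < r"
  proof (intro exI allI impI)
    fix n assume n: "(K'+1)^8 \<le> n"
    then have n1: "1 \<le> n" using le_trans[OF _ n, of 1] by (simp add: Suc_le_eq)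
    obtain j where j: "(j+1)^8 \<le> n" "n < (j+2::nat)^8" using bracket8[OF n1] by blast
    have "(K'+1)^8 < (j+2)^8" using n j(2) by (rule le_less_trans)
    then have "K'+1 < j+2" by (rule power_less_imp_less_base) simp
    then have jK: "K' \<le> j" by simp
    define u where "u = real j + 1"
    have u1: "1 \<le> u" by (simp add: u_def)
    have N1: "real ((j+1)^8) = u^8" by (simp add: u_def add.commute)
    have N2: "real ((j+2)^8) = (u+1)^8" by (simp add: u_def add.commute add.left_commute)
    have b1: "\<bar>a ((j+1)^8) - e ((j+1)^8)\<bar> < u^7" using hK[of j] jK by (simp add: u_def K'_def)
    have b2: "\<bar>a ((j+2)^8) - e ((j+2)^8)\<bar> < (u+1)^7"
    proof -
      have jj: "j + 1 + 1 = j + 2" by simp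
      have uu: "real (j+1) + 1 = u + 1" by (simp add: u_def)
      have "j + 1 \<ge> K" using jK by (simp add: K'_def)
      from hK[OF this] show ?thesis by (simp only: jj uu)
    qed
    have m1: "a ((j+1)^8) \<le> a n" "a n \<le> a ((j+2)^8)" using amono[OF j(1)] amono[of n "(j+2)^8"] j(2) by auto
    have e1: "0 \<le> e n - e ((j+1)^8)" "0 \<le> e ((j+2)^8) - e n"
      using einc[OF j(1)] einc[of n "(j+2)^8"] j(2) by auto
    have e2: "e ((j+2)^8) - e ((j+1)^8) \<le> (u+1)^8 - u^8"
      using einc[of "(j+1)^8" "(j+2)^8"] j N1 N2 by simp
    have p: "(u+1)^8 - u^8 \<le> 255 * u^7" "(u+1)^7 \<le> 128 * u^7" using poly8[OF u1] by auto
    have u7: "0 \<le> u^7" using u1 by simp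
    have bd: "\<bar>a n - e n\<bar> \<le> 400 * u^7"
      using b1 b2 m1 e1 e2 p u7 unfolding abs_less_iff abs_le_iff by linarith
    have nu: "u^8 \<le> real n" using j(1) N1 by (metis of_nat_le_iff)
    have upos: "0 < u" using u1 by simp
    have "\<bar>(a n - e n) / real n\<bar> = \<bar>a n - e n\<bar> / real n" using n1 by simp
    also have "\<dots> \<le> 400 * u^7 / real n" using bd n1 by (simp add: divide_right_mono)
    also have "\<dots> \<le> 400 * u^7 / u^8" proof (rule divide_left_mono)
      have "0 < u^8" using upos by simp
      then show "0 < real n * u^8" using nu n1 by (intro mult_pos_pos) auto
    next
      show "0 \<le> 400 * u^7" using upos by simp
      show "u^8 \<le> real n" by (rule nu)
    qed
    also have "\<dots> = 400 / u"
    proof -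
      have h: "u^8 = u^7 * u" by (simp add: numeral_eq_Suc)
      show ?thesis unfolding h using upos by simp
    qed
    also have "\<dots> < r"
    proof -
      have "real m \<le> real j" using jK by (simp add: K'_def)
      then have "400 / r < u" using m by (simp add: u_def)
      then show ?thesis using r upos by (simp add: field_simps)
    qed
    finally show "norm ((a n - e n) / real n - 0) < r" by simp
  qed
qed


definition pre :: "(nat \<Rightarrow> bool) \<Rightarrow> nat \<Rightarrow> bool list" where
  "pre x n = rev (map x [0..<n])"

lemma pre_0[simp]: "pre x 0 = []" by (simp add: pre_def)
lemma pre_Suc[simp]: "pre x (Suc n) = x n # pre x n" by (simp add: pre_def)
lemma length_pre[simp]: "length (pre x n) = n" by (simp add: pre_def)
lemma pre_Ls[simp]: "pre x n \<in> Ls n" by (simp add: Ls_def)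

lemma pre_eq_iff: "pre y n = pre x n \<longleftrightarrow> (\<forall>i<n. y i = x i)"
  by (auto simp: pre_def map_eq_conv)

lemma cyl_pre: "cylinder x n = {y. pre y n = pre x n}"
  by (auto simp: cylinder_def pre_eq_iff)

definition ext :: "bool list \<Rightarrow> nat \<Rightarrow> bool" where
  "ext rs = (\<lambda>i. if i < length rs then rev rs ! i else False)"

lemma pre_ext: "pre (ext rs) (length rs) = rs"
proof -
  have "map (ext rs) [0..<length rs] = map (\<lambda>i. rev rs ! i) [0..<length (rev rs)]"
    by (rule map_cong) (auto simp: ext_def)
  also have "\<dots> = rev rs" by (rule map_nth)
  finally show ?thesis by (simp add: pre_def)
qed

lemma space_K: "space Kspace = UNIV"
  by (auto simp: Kspace_def space_PiM PiE_def extensional_def)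

context mk begin

lemma W_pre: "WW (pre x n) = markov_weight p q x n"
proof (induction n)
  case 0 then show ?case by (simp add: markov_weight_def)
next
  case (Suc n)
  show ?case
  proof (cases n)
    case 0 then show ?thesis by (simp add: markov_weight_def trans_prop_def)
  next
    case (Suc m)
    have "markov_weight p q x (Suc n) = markov_weight p q x n * tr n (x m) (x n)"
      unfolding markov_weight_def using Suc by (simp add: prod.atLeastLessThan_Suc)
    then show ?thesis using Suc.IH \<open>n = Suc m\<close> by simp
  qed
qed

end

locale mkM = mk +
  fixes M :: "(nat \<Rightarrow> bool) measure"
  assumes M_prob: "prob_space M"
    and M_sets: "sets M = sets Kspace"
    and M_cyl: "\<And>x n. measure M (cylinder x n) = markov_weight p q x n"
begin

lemma space_M: "space M = UNIV" using sets_eq_imp_space_eq[OF M_sets] space_K by simp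

lemma sets_coord: "{y. y i = c} \<in> sets M"
proof -
  have "(\<lambda>y. y i) \<in> measurable Kspace (count_space UNIV)"
    unfolding Kspace_def by (rule measurable_component_singleton) simp
  then have "(\<lambda>y. y i) -` {c} \<inter> space Kspace \<in> sets Kspace" by (rule measurable_sets) simp
  then show ?thesis using M_sets space_K by (simp add: vimage_def)
qed

lemma sets_prefix: "{y. \<forall>i<n. y i = c i} \<in> sets M"
proof (induction n)
  case 0 then show ?case using sets.top[of M] by (simp add: space_M)
next
  case (Suc n)
  have "{y. \<forall>i<Suc n. y i = c i} = {y. \<forall>i<n. y i = c i} \<inter> {y. y n = c n}"
    by (auto simp: less_Suc_eq)
  then show ?case using Suc sets_coord by simp
qed

lemma pre_set_eq: "length rs = n \<Longrightarrow> {y. pre y n = rs} = {y. \<forall>i<n. y i = ext rs i}"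
  using pre_eq_iff[of _ n "ext rs"] pre_ext[of rs] by auto

lemma sets_pre: "{y. pre y n = rs} \<in> sets M"
proof (cases "length rs = n")
  case True then show ?thesis using pre_set_eq[OF True] sets_prefix by simp
next
  case False
  then have "{y. pre y n = rs} = {}" by auto
  then show ?thesis by simp
qed

lemma meas_pre: "length rs = n \<Longrightarrow> measure M {y. pre y n = rs} = WW rs"
proof -
  assume l: "length rs = n"
  have "{y. pre y n = rs} = cylinder (ext rs) n" using l pre_ext[of rs] by (simp add: cyl_pre)
  then show ?thesis using M_cyl W_pre l pre_ext[of rs] by metis
qed

lemma sets_preB: "B \<subseteq> Ls n \<Longrightarrow> {y. pre y n \<in> B} \<in> sets M"
proof -
  assume B: "B \<subseteq> Ls n"
  then have f: "finite B" using finite_Ls finite_subset by blast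
  have "{y. pre y n \<in> B} = (\<Union>rs\<in>B. {y. pre y n = rs})" by auto
  then show ?thesis using f sets_pre by (simp add: sets.finite_UN)
qed

lemma meas_preB: "B \<subseteq> Ls n \<Longrightarrow> measure M {y. pre y n \<in> B} = (\<Sum>rs\<in>B. WW rs)"
proof -
  assume B: "B \<subseteq> Ls n"
  interpret P: prob_space M by (rule M_prob)
  have f: "finite B" using B finite_Ls finite_subset by blast
  have e: "{y. pre y n \<in> B} = (\<Union>rs\<in>B. {y. pre y n = rs})" by auto
  have "measure M (\<Union>rs\<in>B. {y. pre y n = rs}) = (\<Sum>rs\<in>B. measure M {y. pre y n = rs})"
    using f sets_pre by (intro measure_finite_Union) (auto simp: disjoint_family_on_def)
  then have "measure M {y. pre y n \<in> B} = (\<Sum>rs\<in>B. measure M {y. pre y n = rs})"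
    by (simp only: e)
  also have "\<dots> = (\<Sum>rs\<in>B. WW rs)" using B by (intro sum.cong) (auto simp: meas_pre Ls_def)
  finally show ?thesis .
qed

lemma cylinders_eq: "cylinders n = (\<lambda>rs. {y. pre y n = rs}) ` Ls n"
proof
  show "cylinders n \<subseteq> (\<lambda>rs. {y. pre y n = rs}) ` Ls n"
    by (auto simp: cylinders_def cyl_pre)
  show "(\<lambda>rs. {y. pre y n = rs}) ` Ls n \<subseteq> cylinders n"
  proof
    fix I assume "I \<in> (\<lambda>rs. {y. pre y n = rs}) ` Ls n"
    then obtain rs where rs: "rs \<in> Ls n" "I = {y. pre y n = rs}" by blast
    then have "I = cylinder (ext rs) n" using pre_ext[of rs] by (simp add: cyl_pre Ls_def)
    then show "I \<in> cylinders n" by (auto simp: cylinders_def)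
  qed
qed

lemma inj_pre: "inj_on (\<lambda>rs. {y. pre y n = rs}) (Ls n)"
proof (rule inj_onI)
  fix r1 r2 assume r: "r1 \<in> Ls n" "r2 \<in> Ls n" "{y. pre y n = r1} = {y. pre y n = r2}"
  have "ext r1 \<in> {y. pre y n = r1}" using r(1) pre_ext[of r1] by (simp add: Ls_def)
  then show "r1 = r2" using r(3) by auto
qed

lemma entropy_eq: "entropy_coeff M n = ES n / (real n * ln 2)"
proof -
  have "(\<Sum>I\<in>cylinders n. (if measure M I = 0 then 0 else measure M I * ln (measure M I)))
      = (\<Sum>rs\<in>Ls n. (if WW rs = 0 then 0 else WW rs * ln (WW rs)))"
    unfolding cylinders_eq by (subst sum.reindex[OF inj_pre]) (auto simp: meas_pre Ls_def intro!: sum.cong)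
  also have "\<dots> = - ES n" by (auto simp: ES_def S_def sum_negf[symmetric] intro!: sum.cong)
  finally show ?thesis by (simp add: entropy_coeff_def)
qed

lemma cheb: assumes c: "0 < c"
  shows "measure M {y. pre y n \<in> {rs\<in>Ls n. c \<le> \<bar>S rs - ES n\<bar>}} \<le> VV n / c^2"
proof -
  let ?B = "{rs\<in>Ls n. c \<le> \<bar>S rs - ES n\<bar>}"
  have "measure M {y. pre y n \<in> ?B} = (\<Sum>rs\<in>?B. WW rs)" by (rule meas_preB) auto
  also have "\<dots> \<le> (\<Sum>rs\<in>?B. WW rs * (S rs - ES n)^2 / c^2)"
  proof (rule sum_mono)
    fix rs assume "rs \<in> ?B"
    then have "c \<le> \<bar>S rs - ES n\<bar>" by simp
    then have "c^2 \<le> \<bar>S rs - ES n\<bar>^2" using c by (intro power_mono) auto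
    then have "1 \<le> (S rs - ES n)^2 / c^2" using c by simp
    then have "WW rs * 1 \<le> WW rs * ((S rs - ES n)^2 / c^2)" using W_nonneg by (intro mult_left_mono) auto
    then show "WW rs \<le> WW rs * (S rs - ES n)^2 / c^2" by simp
  qed
  also have "\<dots> \<le> (\<Sum>rs\<in>Ls n. WW rs * (S rs - ES n)^2 / c^2)"
    by (rule sum_mono2) (auto intro!: divide_nonneg_nonneg mult_nonneg_nonneg W_nonneg)
  also have "\<dots> = VV n / c^2" by (simp add: VV_def sum_divide_distrib)
  finally show ?thesis .
qed

end


context mkM begin

definition Nk :: "nat \<Rightarrow> nat" where "Nk k = (k+1)^8"
definition Bk where "Bk k = {rs\<in>Ls (Nk k). (real k + 1)^7 \<le> \<bar>S rs - ES (Nk k)\<bar>}"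
definition Ak where "Ak k = {y. pre y (Nk k) \<in> Bk k}"

lemma sets_Ak: "Ak k \<in> sets M" unfolding Ak_def by (rule sets_preB) (auto simp: Bk_def)

lemma meas_Ak: "measure M (Ak k) \<le> 17 / (real k + 1)^2"
proof -
  define u where "u = real k + 1"
  have u1: "1 \<le> u" by (simp add: u_def)
  have "measure M (Ak k) \<le> VV (Nk k) / (u^7)^2"
    unfolding Ak_def Bk_def u_def by (rule cheb) simp
  also have "\<dots> \<le> 17 * u^12 / (u^7)^2"
    using VV_k8[of k] u1 by (intro divide_right_mono) (auto simp: Nk_def u_def)
  also have "17 * u^12 / (u^7)^2 = 17 / u^2"
    using u1 by (simp add: field_simps flip: power_add power_mult)
  finally show ?thesis by (simp add: u_def)
qed

lemma summable_Ak: "summable (\<lambda>k. measure M (Ak k))"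
proof (rule summable_comparison_test')
  have s: "summable (\<lambda>k. inverse (real (Suc k) ^ 2))"
    by (rule summable_Suc_iff[THEN iffD2]) (rule inverse_power_summable, simp)
  have e: "\<And>k. 17 * inverse (real (Suc k) ^ 2) = 17 / (real k + 1)^2"
    by (simp add: divide_inverse add.commute)
  show "summable (\<lambda>k. 17 / (real k + 1)^2)" unfolding e[symmetric] by (rule summable_mult[OF s])
  fix k :: nat
  show "norm (measure M (Ak k)) \<le> 17 / (real k + 1)^2" using meas_Ak[of k] by simp
qed

lemma AE_BC: "AE y in M. eventually (\<lambda>k. y \<in> space M - Ak k) sequentially"
proof (rule borel_cantelli_AE1)
  interpret P: prob_space M by (rule M_prob)
  show "\<And>k. Ak k \<in> sets M" by (rule sets_Ak)
  show "\<And>k. emeasure M (Ak k) < \<infinity>" by (simp add: less_top[symmetric])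
  show "summable (\<lambda>k. measure M (Ak k))" by (rule summable_Ak)
qed

lemma AE_pos: "AE y in M. \<forall>n. 0 < WW (pre y n)"
proof (subst AE_all_countable, intro allI)
  fix n
  interpret P: prob_space M by (rule M_prob)
  let ?N = "{y. pre y n \<in> {rs\<in>Ls n. WW rs = 0}}"
  have "?N \<in> sets M" by (rule sets_preB) auto
  moreover have "measure M ?N = 0" by (subst meas_preB) auto
  ultimately have "?N \<in> null_sets M" by (simp add: null_sets_def P.emeasure_eq_measure)
  moreover have "{y\<in>space M. \<not> 0 < WW (pre y n)} \<subseteq> ?N"
    using W_nonneg by (auto simp: less_le)
  ultimately show "AE y in M. 0 < WW (pre y n)" by (rule AE_I')
qed

lemma main: "AE y in M. ((\<lambda>n. ln (measure M (cylinder y n)) / (- real n * ln 2) - entropy_coeff M n) \<longlongrightarrow> 0) sequentially"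
proof -
  have "AE y in M. (\<forall>n. 0 < WW (pre y n)) \<and> eventually (\<lambda>k. y \<in> space M - Ak k) sequentially"
    using AE_pos AE_BC by (rule AE_conjI)
  then show ?thesis
  proof (rule AE_mp[OF _ AE_I2], intro impI)
    fix y assume y: "(\<forall>n. 0 < WW (pre y n)) \<and> eventually (\<lambda>k. y \<in> space M - Ak k) sequentially"
    define a where "a n = S (pre y n)" for n
    have astep: "a n \<le> a (Suc n)" for n
    proof -
      have p1: "0 < WW (pre y n)" "0 < WW (pre y (Suc n))" using conjunct1[OF y] by blast+
      have "WW (pre y n) * tr n (st (pre y n)) (y n) \<le> WW (pre y n) * 1"
        by (rule mult_left_mono[OF tr_le1 W_nonneg])
      then have "WW (pre y (Suc n)) \<le> WW (pre y n)" by simp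
      then have "ln (WW (pre y (Suc n))) \<le> ln (WW (pre y n))" using p1 by simp
      then show ?thesis by (simp add: a_def S_def)
    qed
    have amono: "m \<le> n \<Longrightarrow> a m \<le> a n" for m n by (rule lift_Suc_mono_le[of a, OF astep])
    have ev: "eventually (\<lambda>k. \<bar>a ((k+1)^8) - ES ((k+1)^8)\<bar> < (real k + 1)^7) sequentially"
      using conjunct2[OF y]
    proof (rule eventually_mono)
      fix k assume "y \<in> space M - Ak k"
      then have "pre y (Nk k) \<notin> Bk k" by (simp add: Ak_def)
      then show "\<bar>a ((k+1)^8) - ES ((k+1)^8)\<bar> < (real k + 1)^7"
        by (simp add: Bk_def a_def Nk_def not_le)
    qed
    have lim: "(\<lambda>n. (a n - ES n) / real n) \<longlonglongrightarrow> 0"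
      by (rule det_lim[OF amono ES_mono ev])
    have eq: "ln (measure M (cylinder y n)) / (- real n * ln 2) - entropy_coeff M n
          = (a n - ES n) / real n * (1 / ln 2)" for n
    proof -
      have "ln (measure M (cylinder y n)) = - a n"
        by (simp add: M_cyl W_pre[symmetric] a_def S_def)
      then show ?thesis by (simp add: entropy_eq diff_divide_distrib)
    qed
    show "((\<lambda>n. ln (measure M (cylinder y n)) / (- real n * ln 2) - entropy_coeff M n) \<longlongrightarrow> 0) sequentially"
      unfolding eq by (rule tendsto_mult_left_zero[OF lim])
  qed
qed

end

theorem mainTheorem6:
  fixes p q :: "nat \<Rightarrow> real" and M :: "(nat \<Rightarrow> bool) measure"
  assumes p_range: "\<And>n. 0 \<le> p n \<and> p n \<le> 1"
    and q_range: "\<And>n. 0 \<le> q n \<and> q n \<le> 1"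
    and M_prob: "prob_space M"
    and M_sets: "sets M = sets Kspace"
    and M_cyl: "\<And>x n. measure M (cylinder x n) = markov_weight p q x n"
  shows "AE x in M. ((\<lambda>n. ln (measure M (cylinder x n)) / (- real n * ln 2)
                             - entropy_coeff M n) \<longlongrightarrow> 0) sequentially"
proof -
  have "mkM p q M"
  proof (rule mkM.intro)
    show "mk p q" by (rule mk.intro) (rule p_range, rule q_range)
    show "mkM_axioms p q M" by (rule mkM_axioms.intro) (rule M_prob, rule M_sets, rule M_cyl)
  qed
  then show ?thesis by (rule mkM.main)
qed


end
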